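(* Let $\beta=(\beta_n)_{n\ge0}$ be a sequence of positive numbers with $\liminf_n\beta_n^{1/n}\ge1$. The following are equivalent: 1) every symbol $\phi$ with $\phi(0)=0$ induces a bounded composition operator $C_\phi$ on $H^2(\beta)$, and $\sup\{\|C_\phi\|:\phi \text{ symbol},\ \phi(0)=0\}<\infty$; 2) $\beta$ is essentially decreasing.
   Context: $H^2(\beta)$ is the Hilbert space of analytic functions $f(z)=\sum_{n\ge0}a_nz^n$ on the unit disk $\mathbb D$ with $\|f\|^2=\sum_{n\ge0}|a_n|^2\beta_n<\infty$. A symbol is a non-constant analytic map $\phi:\mathbb D\to\mathbb D$ and $C_\phi f=f\circ\phi$. $\beta$ is essentially decreasing if there is $C\ge1$ with $\beta_m\le C\beta_n$ for all $m\ge n\ge0$. *)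

theory Defs
  imports "HOL-Complex_Analysis.Complex_Analysis"
begin

definition taylor_coeff :: "(complex \<Rightarrow> complex) \<Rightarrow> nat \<Rightarrow> complex" where
  "taylor_coeff f n = (deriv ^^ n) f 0 / of_nat (fact n)"

definition in_H2 :: "(nat \<Rightarrow> real) \<Rightarrow> (complex \<Rightarrow> complex) \<Rightarrow> bool" where
  "in_H2 \<beta> f \<longleftrightarrow> f holomorphic_on ball 0 1 \<and>
      summable (\<lambda>n. (cmod (taylor_coeff f n))^2 * \<beta> n)"

definition H2_norm :: "(nat \<Rightarrow> real) \<Rightarrow> (complex \<Rightarrow> complex) \<Rightarrow> real" where
  "H2_norm \<beta> f = sqrt (\<Sum>n. (cmod (taylor_coeff f n))^2 * \<beta> n)"

definition symbol :: "(complex \<Rightarrow> complex) \<Rightarrow> bool" where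
  "symbol \<phi> \<longleftrightarrow> \<phi> holomorphic_on ball 0 1 \<and> \<phi> ` ball 0 1 \<subseteq> ball 0 1 \<and>
      \<not> (\<exists>c. \<forall>z\<in>ball 0 1. \<phi> z = c)"

definition bounded_comp_op :: "(nat \<Rightarrow> real) \<Rightarrow> (complex \<Rightarrow> complex) \<Rightarrow> bool" where
  "bounded_comp_op \<beta> \<phi> \<longleftrightarrow>
     (\<forall>f. in_H2 \<beta> f \<longrightarrow> in_H2 \<beta> (f \<circ> \<phi>)) \<and>
     (\<exists>M. \<forall>f. in_H2 \<beta> f \<longrightarrow> H2_norm \<beta> (f \<circ> \<phi>) \<le> M * H2_norm \<beta> f)"

definition comp_op_norm :: "(nat \<Rightarrow> real) \<Rightarrow> (complex \<Rightarrow> complex) \<Rightarrow> real" where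
  "comp_op_norm \<beta> \<phi> = Sup {H2_norm \<beta> (f \<circ> \<phi>) | f. in_H2 \<beta> f \<and> H2_norm \<beta> f \<le> 1}"

definition essentially_decreasing :: "(nat \<Rightarrow> real) \<Rightarrow> bool" where
  "essentially_decreasing \<beta> \<longleftrightarrow> (\<exists>C\<ge>1. \<forall>m n. n \<le> m \<longrightarrow> \<beta> m \<le> C * \<beta> n)"

end

theory Submission
  imports Defs
begin

definition E :: "real \<Rightarrow> complex" where "E t = exp (2 * of_real pi * \<i> * of_real t)"

lemma E_nz [simp]: "E t \<noteq> 0" by (simp add: E_def)
lemma norm_E [simp]: "norm (E t) = 1" by (simp add: E_def norm_exp_eq_Re)
lemma cnj_E: "cnj (E t) = inverse (E t)"
  by (simp add: E_def exp_cnj exp_minus[symmetric])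
lemma continuous_E [continuous_intros]: "continuous_on S E"
  unfolding E_def by (intro continuous_intros)

lemma fourier:
  assumes hol: "F holomorphic_on ball 0 1" and r: "0 < r" "r < 1"
  shows "((\<lambda>t. F (of_real r * E t) / E t ^ k) has_integral (of_real r ^ k * taylor_coeff F k)) {0..1}"
proof -
  have contf: "continuous_on (cball 0 r) F"
    by (rule continuous_on_subset[OF holomorphic_on_imp_continuous_on[OF hol]]) (use r in auto)
  have holf: "F holomorphic_on ball 0 r"
    by (rule holomorphic_on_subset[OF hol]) (use r in auto)
  have "((\<lambda>u. F u / (u-0) ^ (Suc k)) has_contour_integral ((2 * pi * \<i>) / (fact k) * (deriv ^^ k) F 0))
           (circlepath 0 r)"
    by (rule Cauchy_has_contour_integral_higher_derivative_circlepath[OF contf holf]) (use r in auto)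
  hence "((\<lambda>x. F (circlepath 0 r x) / (circlepath 0 r x) ^ Suc k * vector_derivative (circlepath 0 r) (at x within {0..1}))
       has_integral ((2 * pi * \<i>) / (fact k) * (deriv ^^ k) F 0)) {0..1}"
    by (simp add: has_contour_integral_def)
  hence "((\<lambda>x. (2 * pi * \<i> / of_real r ^ k) * (F (of_real r * E x) / E x ^ k))
       has_integral ((2 * pi * \<i>) / (fact k) * (deriv ^^ k) F 0)) {0..1}"
    apply (rule has_integral_cong[THEN iffD1, rotated])
    using r by (simp only: vector_derivative_circlepath01 atLeastAtMost_iff)
      (auto simp: circlepath E_def field_simps power_mult_distrib)
  hence "((\<lambda>x. (of_real r ^ k / (2 * pi * \<i>)) * ((2 * pi * \<i> / of_real r ^ k) * (F (of_real r * E x) / E x ^ k)))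
       has_integral (of_real r ^ k / (2 * pi * \<i>)) * ((2 * pi * \<i>) / (fact k) * (deriv ^^ k) F 0)) {0..1}"
    by (rule has_integral_mult_right)
  thus ?thesis
    using r by (simp add: taylor_coeff_def field_simps)
qed

lemma taylor_coeff_fps: "f has_fps_expansion FF \<Longrightarrow> taylor_coeff f n = fps_nth FF n"
  by (simp add: taylor_coeff_def fps_nth_fps_expansion)

lemma taylor_coeff_0 [simp]: "taylor_coeff f 0 = f 0"
  by (simp add: taylor_coeff_def)

lemma taylor_coeff_power: "taylor_coeff (\<lambda>z. z ^ j) k = (if k = j then 1 else 0)"
  by (subst taylor_coeff_fps[OF has_fps_expansion_fps_X_power]) simp

lemma mean_value:
  assumes hol: "F holomorphic_on ball 0 1" and r: "0 < r" "r < 1"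
  shows "((\<lambda>t. F (of_real r * E t)) has_integral F 0) {0..1}"
  using fourier[OF assms, of 0] by simp

lemma ortho: "((\<lambda>t. E t ^ j / E t ^ k) has_integral (if j = k then 1 else 0)) {0..1}"
proof -
  have h: "(\<lambda>z::complex. z ^ j) holomorphic_on ball 0 1" by (intro holomorphic_intros)
  have "((\<lambda>t. (of_real (1/2) * E t) ^ j / E t ^ k) has_integral (of_real (1/2) ^ k * (if k = j then 1 else 0))) {0..1}"
    using fourier[OF h, of "1/2" k] by (simp add: taylor_coeff_power)
  hence "((\<lambda>t. (2 ^ j) * ((of_real (1/2) * E t) ^ j / E t ^ k)) has_integral (2^j) * (of_real (1/2) ^ k * (if k = j then 1 else 0))) {0..1}"
    by (rule has_integral_mult_right)
  hence "((\<lambda>t. E t ^ j / E t ^ k) has_integral (2 ^ j * (if k = j then 1 else 0) / 2 ^ k)) {0..1}"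
    by (simp add: power_mult_distrib field_simps)
  thus ?thesis by (cases "j = k") auto
qed

lemma cmod_diff_sq: "(cmod (a - b))^2 = (cmod a)^2 - 2 * Re (a * cnj b) + (cmod b)^2"
  by (simp add: cmod_power2) (simp add: power2_eq_square algebra_simps)

lemma cmod_sq_Re: "(cmod a)^2 = Re (a * cnj a)"
  by (simp add: cmod_power2) (simp add: power2_eq_square)

lemma cont_circ:
  assumes hol: "g holomorphic_on ball 0 1" and r: "0 < r" "r < 1"
  shows "continuous_on {0..1} (\<lambda>t. g (of_real r * E t))"
proof (rule continuous_on_compose2[OF holomorphic_on_imp_continuous_on[OF hol]])
  show "continuous_on {0..1} (\<lambda>t. of_real r * E t)" by (intro continuous_intros)
  show "(\<lambda>t. of_real r * E t) ` {0..1} \<subseteq> ball 0 1"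
    using r by (auto simp: norm_mult)
qed

lemma bessel:
  assumes hol: "g holomorphic_on ball 0 1" and r: "0 < r" "r < 1"
  shows "(\<Sum>k<N. (cmod (taylor_coeff g k))^2 * r^(2*k)) \<le> integral {0..1} (\<lambda>t. (cmod (g (of_real r * E t)))^2)"
proof -
  define G where "G t = g (of_real r * E t)" for t
  define c where "c k = of_real r ^ k * taylor_coeff g k" for k
  define s where "s t = (\<Sum>k<N. c k * E t ^ k)" for t
  define S where "S = (\<Sum>k<N. (cmod (c k))^2)"
  have S_eq: "S = (\<Sum>k<N. (cmod (taylor_coeff g k))^2 * r^(2*k))"
    unfolding S_def c_def using r
    by (intro sum.cong refl) (simp add: norm_mult norm_power power_mult_distrib power_mult[symmetric] mult.commute)
  have contG: "continuous_on {0..1} G"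
    unfolding G_def by (rule cont_circ[OF hol r])
  have cs: "continuous_on {0..1} s" unfolding s_def by (intro continuous_intros)
  have i1: "((\<lambda>t. G t * cnj (s t)) has_integral of_real S) {0..1}"
  proof -
    have "((\<lambda>t. \<Sum>k<N. cnj (c k) * (G t / E t ^ k)) has_integral (\<Sum>k<N. cnj (c k) * c k)) {0..1}"
      unfolding G_def c_def
      by (intro has_integral_sum finite_lessThan has_integral_mult_right fourier[OF hol r])
    moreover have "G t * cnj (s t) = (\<Sum>k<N. cnj (c k) * (G t / E t ^ k))" for t
      by (simp add: s_def sum_distrib_left cnj_E power_inverse divide_inverse mult_ac)
    moreover have "(\<Sum>k<N. cnj (c k) * c k) = of_real S"
      unfolding S_def of_real_sum
      by (intro sum.cong refl) (simp add: complex_norm_square[symmetric] mult.commute del: of_real_power)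
    ultimately show ?thesis by simp
  qed
  have i2: "((\<lambda>t. s t * cnj (s t)) has_integral of_real S) {0..1}"
  proof -
    have "((\<lambda>t. \<Sum>k<N. \<Sum>l<N. (c k * cnj (c l)) * (E t ^ k / E t ^ l)) has_integral
          (\<Sum>k<N. \<Sum>l<N. (c k * cnj (c l)) * (if k = l then 1 else 0))) {0..1}"
      by (intro has_integral_sum finite_lessThan has_integral_mult_right ortho)
    moreover have "s t * cnj (s t) = (\<Sum>k<N. \<Sum>l<N. (c k * cnj (c l)) * (E t ^ k / E t ^ l))" for t
      by (simp add: s_def sum_distrib_left sum_distrib_right cnj_E power_inverse divide_inverse mult_ac)
         (rule sum.swap)
    moreover have "(\<Sum>k<N. \<Sum>l<N. (c k * cnj (c l)) * (if k = l then 1 else 0)) = of_real S"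
      unfolding S_def of_real_sum
      by (simp add: if_distrib sum.delta cong: if_cong) (intro sum.cong refl, simp add: complex_norm_square[symmetric] del: of_real_power, simp)
    ultimately show ?thesis by simp
  qed
  have cd: "continuous_on {0..1} (\<lambda>t. (cmod (G t - s t))^2)"
    by (intro continuous_intros contG cs)
  define J where "J = integral {0..1} (\<lambda>t. (cmod (G t - s t))^2)"
  have i3: "((\<lambda>t. (cmod (G t - s t))^2) has_integral J) {0..1}"
    unfolding J_def by (rule integrable_integral[OF integrable_continuous_interval[OF cd]])
  have J0: "0 \<le> J" by (rule has_integral_nonneg[OF i3]) simp
  have "((\<lambda>t. (cmod (G t - s t))^2 + 2 * Re (G t * cnj (s t)) - Re (s t * cnj (s t))) has_integral (J + 2 * S - S)) {0..1}"
    using has_integral_Re[OF i1] has_integral_Re[OF i2]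
    by (intro has_integral_diff has_integral_add i3 has_integral_mult_right) auto
  moreover have "(cmod (G t - s t))^2 + 2 * Re (G t * cnj (s t)) - Re (s t * cnj (s t)) = (cmod (G t))^2" for t
    by (simp add: cmod_diff_sq cmod_sq_Re[of "s t"])
  ultimately have "((\<lambda>t. (cmod (G t))^2) has_integral (J + S)) {0..1}" by (simp add: add.commute)
  hence "integral {0..1} (\<lambda>t. (cmod (G t))^2) = J + S" by (simp add: has_integral_integrable_integral)
  thus ?thesis using J0 S_eq unfolding G_def by simp
qed

definition poly_fn :: "(nat \<Rightarrow> complex) \<Rightarrow> nat \<Rightarrow> complex \<Rightarrow> complex" where
  "poly_fn a N z = (\<Sum>j<N. a j * z ^ j)"

lemma poly_fn_Suc: "poly_fn a (Suc N) z = a 0 + z * poly_fn (\<lambda>j. a (Suc j)) N z"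
  unfolding poly_fn_def sum.lessThan_Suc_shift by (simp add: sum_distrib_left mult_ac)

lemma poly_fn_0 [simp]: "poly_fn a 0 z = 0" by (simp add: poly_fn_def)

lemma holo_poly_comp:
  assumes "\<phi> holomorphic_on S" shows "(\<lambda>z. poly_fn a N (\<phi> z)) holomorphic_on S"
  unfolding poly_fn_def by (intro holomorphic_intros assms)

lemma littlewood_poly:
  assumes hol: "\<phi> holomorphic_on ball 0 1" and into: "\<phi> ` ball 0 1 \<subseteq> ball 0 1" and z0: "\<phi> 0 = 0"
    and r: "0 < r" "r < 1"
  shows "integral {0..1} (\<lambda>t. (cmod (poly_fn a N (\<phi> (of_real r * E t))))^2) \<le> (\<Sum>j<N. (cmod (a j))^2)"
proof (induction N arbitrary: a)
  case 0
  then show ?case by simp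
next
  case (Suc N)
  define a' where "a' = (\<lambda>j. a (Suc j))"
  define h where "h z = poly_fn a' N (\<phi> z)" for z
  define H where "H t = h (of_real r * E t)" for t
  define P where "P t = \<phi> (of_real r * E t)" for t
  have holh: "h holomorphic_on ball 0 1" unfolding h_def by (rule holo_poly_comp[OF hol])
  have contH: "continuous_on {0..1} H" unfolding H_def by (rule cont_circ[OF holh r])
  have contP: "continuous_on {0..1} P" unfolding P_def by (rule cont_circ[OF hol r])
  have P1: "cmod (P t) \<le> 1" for t
  proof -
    have "of_real r * E t \<in> ball 0 1" using r by (simp add: norm_mult)
    hence "P t \<in> ball 0 1" using into unfolding P_def by blast
    thus ?thesis by simp
  qed
  have mv: "((\<lambda>t. P t * H t) has_integral 0) {0..1}"
  proof -
    have "(\<lambda>z. \<phi> z * h z) holomorphic_on ball 0 1" by (intro holomorphic_intros hol holh)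
    from mean_value[OF this r] show ?thesis by (simp add: P_def H_def z0)
  qed
  have iRe: "((\<lambda>t. Re (cnj (a 0) * (P t * H t))) has_integral 0) {0..1}"
    using has_integral_Re[OF has_integral_mult_right[OF mv, of "cnj (a 0)"]] by simp
  have cPH: "continuous_on {0..1} (\<lambda>t. (cmod (P t * H t))^2)"
    by (intro continuous_intros contP contH)
  have cH: "continuous_on {0..1} (\<lambda>t. (cmod (H t))^2)"
    by (intro continuous_intros contH)
  define K where "K = integral {0..1} (\<lambda>t. (cmod (P t * H t))^2)"
  have iK: "((\<lambda>t. (cmod (P t * H t))^2) has_integral K) {0..1}"
    unfolding K_def by (rule integrable_integral[OF integrable_continuous_interval[OF cPH]])
  have ic: "((\<lambda>t. (cmod (a 0))^2) has_integral (cmod (a 0))^2) {0..1::real}"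
    using has_integral_const_real[of "(cmod (a 0))^2" 0 1] by simp
  have "((\<lambda>t. (cmod (a 0))^2 + 2 * Re (cnj (a 0) * (P t * H t)) + (cmod (P t * H t))^2)
        has_integral ((cmod (a 0))^2 + 2 * 0 + K)) {0..1}"
    by (intro has_integral_add ic has_integral_mult_right iRe iK)
  moreover have "(cmod (a 0))^2 + 2 * Re (cnj (a 0) * (P t * H t)) + (cmod (P t * H t))^2
      = (cmod (poly_fn a (Suc N) (\<phi> (of_real r * E t))))^2" for t
  proof -
    have "poly_fn a (Suc N) (\<phi> (of_real r * E t)) = a 0 - (- (P t * H t))"
      by (simp add: poly_fn_Suc P_def H_def h_def a'_def)
    thus ?thesis
      by (simp only: cmod_diff_sq) (simp add: algebra_simps)
  qed
  ultimately have "((\<lambda>t. (cmod (poly_fn a (Suc N) (\<phi> (of_real r * E t))))^2)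
        has_integral ((cmod (a 0))^2 + K)) {0..1}" by simp
  hence eq: "integral {0..1} (\<lambda>t. (cmod (poly_fn a (Suc N) (\<phi> (of_real r * E t))))^2) = (cmod (a 0))^2 + K"
    by (simp add: has_integral_integrable_integral)
  have "K \<le> integral {0..1} (\<lambda>t. (cmod (H t))^2)"
    unfolding K_def
  proof (rule integral_le[OF integrable_continuous_interval[OF cPH] integrable_continuous_interval[OF cH]])
    fix t
    have "cmod (P t * H t) \<le> cmod (H t)"
      using P1[of t] by (simp add: norm_mult mult_left_le_one_le)
    thus "(cmod (P t * H t))^2 \<le> (cmod (H t))^2" by (simp add: power_mono)
  qed
  also have "\<dots> \<le> (\<Sum>j<N. (cmod (a' j))^2)"
    using Suc.IH[of a'] by (simp add: H_def h_def)
  finally have "K \<le> (\<Sum>j<N. (cmod (a' j))^2)" .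
  thus ?case using eq unfolding sum.lessThan_Suc_shift by (simp add: a'_def)
qed

lemma poly_fn_fps: "poly_fn a N has_fps_expansion (\<Sum>j<N. fps_const (a j) * fps_X ^ j)"
proof -
  have "(\<lambda>z. \<Sum>j<N. a j * z ^ j) has_fps_expansion (\<Sum>j<N. fps_const (a j) * fps_X ^ j)"
    by (intro has_fps_expansion_sum has_fps_expansion_cmult_left has_fps_expansion_fps_X_power)
  thus ?thesis by (simp add: poly_fn_def[abs_def])
qed

lemma poly_fps_nth: "(\<Sum>j<N. fps_const (a j) * fps_X ^ j) $ i = (if i < N then a i else (0::complex))"
  by (simp add: fps_sum_nth if_distrib sum.delta cong: if_cong)

lemma coeff_trunc:
  assumes holf: "f holomorphic_on ball 0 1" and hol: "\<phi> holomorphic_on ball 0 1" and z0: "\<phi> 0 = 0"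
    and k: "k < N"
  shows "taylor_coeff (f \<circ> \<phi>) k = taylor_coeff (poly_fn (taylor_coeff f) N \<circ> \<phi>) k"
proof -
  define F where "F = fps_expansion f 0"
  define \<Phi> where "\<Phi> = fps_expansion \<phi> 0"
  define P where "P = (\<Sum>j<N. fps_const (taylor_coeff f j) * fps_X ^ j)"
  have fF: "f has_fps_expansion F" unfolding F_def by (rule has_fps_expansion_fps_expansion[OF _ _ holf]) auto
  have pP: "\<phi> has_fps_expansion \<Phi>" unfolding \<Phi>_def by (rule has_fps_expansion_fps_expansion[OF _ _ hol]) auto
  have P0: "\<Phi> $ 0 = 0" using taylor_coeff_fps[OF pP, of 0] z0 by simp
  have e1: "(f \<circ> \<phi>) has_fps_expansion (F oo \<Phi>)" by (rule has_fps_expansion_compose[OF fF pP P0])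
  have e2: "(poly_fn (taylor_coeff f) N \<circ> \<phi>) has_fps_expansion (P oo \<Phi>)"
    unfolding P_def by (rule has_fps_expansion_compose[OF poly_fn_fps pP P0])
  have "(F oo \<Phi>) $ k = (P oo \<Phi>) $ k"
    unfolding fps_compose_nth
  proof (intro sum.cong refl)
    fix i assume "i \<in> {0..k}"
    hence "i < N" using k by simp
    thus "F $ i * (\<Phi> ^ i $ k) = P $ i * (\<Phi> ^ i $ k)"
      using taylor_coeff_fps[OF fF, of i] by (simp add: P_def poly_fps_nth)
  qed
  thus ?thesis using taylor_coeff_fps[OF e1] taylor_coeff_fps[OF e2] by simp
qed

lemma trunc_ineq:
  assumes holf: "f holomorphic_on ball 0 1" and hol: "\<phi> holomorphic_on ball 0 1"
    and into: "\<phi> ` ball 0 1 \<subseteq> ball 0 1" and z0: "\<phi> 0 = 0"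
  shows "(\<Sum>k<N. (cmod (taylor_coeff (f \<circ> \<phi>) k))^2) \<le> (\<Sum>k<N. (cmod (taylor_coeff f k))^2)"
proof -
  define p where "p = poly_fn (taylor_coeff f) N"
  define b where "b k = (cmod (taylor_coeff (f \<circ> \<phi>) k))^2" for k
  have holp: "(p \<circ> \<phi>) holomorphic_on ball 0 1"
    unfolding p_def o_def by (rule holo_poly_comp[OF hol])
  have le: "(\<Sum>k<N. b k * r^(2*k)) \<le> (\<Sum>k<N. (cmod (taylor_coeff f k))^2)" if r: "0 < r" "r < 1" for r
  proof -
    have "(\<Sum>k<N. b k * r^(2*k)) = (\<Sum>k<N. (cmod (taylor_coeff (p \<circ> \<phi>) k))^2 * r^(2*k))"
      unfolding b_def p_def using coeff_trunc[OF holf hol z0] by simp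
    also have "\<dots> \<le> integral {0..1} (\<lambda>t. (cmod ((p \<circ> \<phi>) (of_real r * E t)))^2)"
      by (rule bessel[OF holp r])
    also have "\<dots> \<le> (\<Sum>k<N. (cmod (taylor_coeff f k))^2)"
      unfolding p_def o_def by (rule littlewood_poly[OF hol into z0 r])
    finally show ?thesis .
  qed
  have lim: "((\<lambda>r. \<Sum>k<N. b k * r^(2*k)) \<longlongrightarrow> (\<Sum>k<N. b k * 1^(2*k))) (at_left (1::real))"
    by (intro tendsto_intros)
  have ev: "eventually (\<lambda>r. (\<Sum>k<N. b k * r^(2*k)) \<le> (\<Sum>k<N. (cmod (taylor_coeff f k))^2)) (at_left (1::real))"
  proof -
    have "eventually (\<lambda>x. x \<in> {0<..<1}) (at_left (1::real))" by (rule eventually_at_left_real) simp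
    thus ?thesis by eventually_elim (auto intro: le)
  qed
  have "(\<Sum>k<N. b k * 1^(2*k)) \<le> (\<Sum>k<N. (cmod (taylor_coeff f k))^2)"
    by (rule tendsto_le[OF trivial_limit_at_left_real tendsto_const lim ev])
  thus ?thesis by (simp add: b_def)
qed

lemma majorize_aux:
  fixes x g :: "nat \<Rightarrow> real"
  assumes X: "\<And>N. 0 \<le> (\<Sum>k<N. x k)" and dec: "\<And>k. g (Suc k) \<le> g k"
  shows "g N * (\<Sum>k<N. x k) \<le> (\<Sum>k<N. x k * g k)"
proof (induction N)
  case 0 then show ?case by simp
next
  case (Suc N)
  have "g (Suc N) * (\<Sum>k<Suc N. x k) \<le> g N * (\<Sum>k<Suc N. x k)"
    using X[of "Suc N"] dec[of N] by (simp add: mult_right_mono)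
  also have "\<dots> = g N * (\<Sum>k<N. x k) + x N * g N" by (simp add: algebra_simps)
  also have "\<dots> \<le> (\<Sum>k<N. x k * g k) + x N * g N" using Suc.IH by simp
  finally show ?case by simp
qed

lemma majorize:
  fixes A B g :: "nat \<Rightarrow> real"
  assumes AB: "\<And>N. (\<Sum>k<N. B k) \<le> (\<Sum>k<N. A k)" and dec: "\<And>k. g (Suc k) \<le> g k"
    and g0: "\<And>k. 0 \<le> g k"
  shows "(\<Sum>k<N. B k * g k) \<le> (\<Sum>k<N. A k * g k)"
proof -
  have X: "0 \<le> (\<Sum>k<N. A k - B k)" for N using AB[of N] by (simp add: sum_subtractf)
  have "g N * (\<Sum>k<N. A k - B k) \<le> (\<Sum>k<N. (A k - B k) * g k)"
    using majorize_aux[of "\<lambda>k. A k - B k" g N] X dec by blast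
  moreover have "0 \<le> g N * (\<Sum>k<N. A k - B k)" using g0[of N] X[of N] by simp
  ultimately show ?thesis by (simp add: left_diff_distrib sum_subtractf)
qed

lemma ess_dec_bound:
  assumes pos: "\<And>n. \<beta> n > 0" and C: "C \<ge> 1" "\<And>m n. n \<le> m \<Longrightarrow> \<beta> m \<le> C * \<beta> n"
    and holf: "f holomorphic_on ball 0 1" and sf: "summable (\<lambda>n. (cmod (taylor_coeff f n))^2 * \<beta> n)"
    and hol: "\<phi> holomorphic_on ball 0 1" and into: "\<phi> ` ball 0 1 \<subseteq> ball 0 1" and z0: "\<phi> 0 = 0"
  shows "summable (\<lambda>n. (cmod (taylor_coeff (f \<circ> \<phi>) n))^2 * \<beta> n)"
    and "(\<Sum>n. (cmod (taylor_coeff (f \<circ> \<phi>) n))^2 * \<beta> n) \<le> C * (\<Sum>n. (cmod (taylor_coeff f n))^2 * \<beta> n)"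
proof -
  define g where "g k = Sup (\<beta> ` {k..})" for k
  define A where "A k = (cmod (taylor_coeff f k))^2" for k
  define B where "B k = (cmod (taylor_coeff (f \<circ> \<phi>) k))^2" for k
  have bdd: "bdd_above (\<beta> ` {k..})" for k
    using C(2)[of k] by (auto intro!: bdd_aboveI[of _ "C * \<beta> k"])
  have g_ge: "\<beta> k \<le> g k" for k unfolding g_def by (rule cSup_upper[OF _ bdd]) auto
  have g_le: "g k \<le> C * \<beta> k" for k unfolding g_def by (rule cSup_least) (auto intro: C(2))
  have g_dec: "g (Suc k) \<le> g k" for k
    unfolding g_def by (rule cSup_subset_mono) (auto intro: bdd)
  have g0: "0 \<le> g k" for k using g_ge[of k] pos[of k] by simp
  have AB: "(\<Sum>k<N. B k) \<le> (\<Sum>k<N. A k)" for N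
    unfolding A_def B_def by (rule trunc_ineq[OF holf hol into z0])
  have part: "(\<Sum>k<N. B k * \<beta> k) \<le> C * (\<Sum>n. A n * \<beta> n)" for N
  proof -
    have "(\<Sum>k<N. B k * \<beta> k) \<le> (\<Sum>k<N. B k * g k)"
      by (intro sum_mono mult_left_mono g_ge) (simp add: B_def)
    also have "\<dots> \<le> (\<Sum>k<N. A k * g k)" using majorize[of B A g N] AB g_dec g0 by blast
    also have "\<dots> \<le> (\<Sum>k<N. A k * (C * \<beta> k))"
      by (intro sum_mono mult_left_mono g_le) (simp add: A_def)
    also have "\<dots> = C * (\<Sum>k<N. A k * \<beta> k)" by (simp add: sum_distrib_left mult_ac)
    also have "\<dots> \<le> C * (\<Sum>n. A n * \<beta> n)"
      using C(1) sf pos by (intro mult_left_mono sum_le_suminf) (auto simp: A_def less_imp_le)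
    finally show ?thesis .
  qed
  have sB: "summable (\<lambda>n. B n * \<beta> n)"
  proof (rule bounded_imp_summable)
    show "0 \<le> B n * \<beta> n" for n using pos[of n] by (simp add: B_def)
    show "(\<Sum>k\<le>n. B k * \<beta> k) \<le> C * (\<Sum>n. A n * \<beta> n)" for n
      using part[of "Suc n"] by (simp add: lessThan_Suc_atMost)
  qed
  thus "summable (\<lambda>n. (cmod (taylor_coeff (f \<circ> \<phi>) n))^2 * \<beta> n)" by (simp add: B_def)
  have "(\<Sum>n. B n * \<beta> n) \<le> C * (\<Sum>n. A n * \<beta> n)"
    by (rule suminf_le_const[OF sB part])
  thus "(\<Sum>n. (cmod (taylor_coeff (f \<circ> \<phi>) n))^2 * \<beta> n) \<le> C * (\<Sum>n. (cmod (taylor_coeff f n))^2 * \<beta> n)"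
    by (simp add: A_def B_def)
qed

lemma construct:
  assumes n: "1 \<le> n" and d: "1 \<le> d"
  shows "\<exists>\<phi>. symbol \<phi> \<and> \<phi> 0 = 0 \<and> (\<forall>z\<in>ball 0 1. (\<phi> z) ^ n = z ^ n * ((1 + z ^ d) / 2))"
proof -
  define h where "h z = (1 + z ^ d) / 2" for z :: complex
  define u where "u z = exp (Ln (h z) / of_nat n)" for z
  define \<phi> where "\<phi> z = z * u z" for z
  have nz: "norm (z ^ d) < 1" if "z \<in> ball 0 1" for z :: complex
  proof -
    have "norm z < 1" using that by simp
    have "norm z ^ d \<le> norm z ^ 1" by (rule power_decreasing) (use d \<open>norm z < 1\<close> in auto)
    thus ?thesis using \<open>norm z < 1\<close> unfolding norm_power by simp
  qed
  have Reh: "0 < Re (h z)" if "z \<in> ball 0 1" for z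
  proof -
    have "\<bar>Re (z ^ d)\<bar> \<le> norm (z ^ d)" by (rule abs_Re_le_cmod)
    thus ?thesis using nz[OF that] by (simp add: h_def)
  qed
  have hnz: "h z \<noteq> 0" if "z \<in> ball 0 1" for z using Reh[OF that] by auto
  have hle: "norm (h z) \<le> 1" if "z \<in> ball 0 1" for z
  proof -
    have "norm (1 + z ^ d) \<le> 1 + norm (z ^ d)" using norm_triangle_ineq[of 1 "z ^ d"] by simp
    thus ?thesis using nz[OF that] by (simp add: h_def)
  qed
  have un: "u z ^ n = h z" if "z \<in> ball 0 1" for z
  proof -
    have "u z ^ n = exp (of_nat n * (Ln (h z) / of_nat n))"
      by (simp add: u_def exp_of_nat_mult[symmetric] del: exp_of_nat_mult)
    also have "\<dots> = h z" using n hnz[OF that] by simp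
    finally show ?thesis .
  qed
  have ule: "norm (u z) \<le> 1" if "z \<in> ball 0 1" for z
  proof -
    have "norm (u z) ^ n \<le> 1" using un[OF that] hle[OF that] by (simp add: norm_power[symmetric])
    thus ?thesis using n by (simp add: power_le_one_iff)
  qed
  have holh: "h holomorphic_on ball 0 1" unfolding h_def[abs_def] by (intro holomorphic_intros) auto
  have holu: "u holomorphic_on ball 0 1"
    unfolding u_def[abs_def]
    by (intro holomorphic_intros holh) (use Reh n in \<open>force simp: complex_nonpos_Reals_iff\<close>)+
  have hol: "\<phi> holomorphic_on ball 0 1" unfolding \<phi>_def[abs_def] by (intro holomorphic_intros holu)
  have into: "\<phi> ` ball 0 1 \<subseteq> ball 0 1"
  proof
    fix w assume "w \<in> \<phi> ` ball 0 1"
    then obtain z where z: "z \<in> ball 0 1" "w = \<phi> z" by auto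
    have "norm (\<phi> z) \<le> norm z" using ule[OF z(1)] mult_left_le[of "cmod (u z)" "cmod z"] by (simp add: \<phi>_def norm_mult)
    thus "w \<in> ball 0 1" using z by simp
  qed
  have nc: "\<not> (\<exists>c. \<forall>z\<in>ball 0 1. \<phi> z = c)"
  proof
    assume "\<exists>c. \<forall>z\<in>ball 0 1. \<phi> z = c"
    then obtain c where c: "\<forall>z\<in>ball 0 1. \<phi> z = c" by blast
    have "\<phi> 0 = c" using c by simp
    moreover have "\<phi> (1/2) = c" using c by simp
    ultimately show False by (simp add: \<phi>_def u_def)
  qed
  have "\<forall>z\<in>ball 0 1. (\<phi> z) ^ n = z ^ n * ((1 + z ^ d) / 2)"
    using un by (simp add: \<phi>_def power_mult_distrib h_def)
  moreover have "symbol \<phi>" using hol into nc by (simp add: symbol_def)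
  moreover have "\<phi> 0 = 0" by (simp add: \<phi>_def)
  ultimately show ?thesis by blast
qed

lemma coeff_eq_fps:
  assumes "g has_fps_expansion G" "\<forall>z\<in>ball 0 1. f z = g z"
  shows "taylor_coeff f k = G $ k"
proof -
  have ev: "eventually (\<lambda>z. f z = g z) (nhds 0)"
    using eventually_nhds_in_open[of "ball (0::complex) 1" 0] assms(2) by (auto elim: eventually_mono)
  have "taylor_coeff f k = taylor_coeff g k"
    unfolding taylor_coeff_def using higher_deriv_cong_ev[OF ev refl] by simp
  thus ?thesis using taylor_coeff_fps[OF assms(1)] by simp
qed

lemma H2_le_norm:
  assumes pos: "\<And>n. \<beta> n > 0" and bc: "bounded_comp_op \<beta> \<phi>" and f: "in_H2 \<beta> f" "H2_norm \<beta> f \<le> 1"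
  shows "H2_norm \<beta> (f \<circ> \<phi>) \<le> comp_op_norm \<beta> \<phi>"
proof -
  obtain M where M: "\<And>g. in_H2 \<beta> g \<Longrightarrow> H2_norm \<beta> (g \<circ> \<phi>) \<le> M * H2_norm \<beta> g"
    using bc unfolding bounded_comp_op_def by blast
  have bdd: "bdd_above {H2_norm \<beta> (g \<circ> \<phi>) | g. in_H2 \<beta> g \<and> H2_norm \<beta> g \<le> 1}"
  proof (rule bdd_aboveI[of _ "\<bar>M\<bar>"], clarify)
    fix g assume g: "in_H2 \<beta> g" "H2_norm \<beta> g \<le> 1"
    have "0 \<le> H2_norm \<beta> g" using g(1) pos unfolding H2_norm_def in_H2_def
      by (simp add: suminf_nonneg less_imp_le)
    hence "M * H2_norm \<beta> g \<le> \<bar>M\<bar>" using g(2)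
      by (cases "M \<ge> 0") (auto intro: mult_left_le order_trans[OF mult_nonpos_nonneg])
    thus "H2_norm \<beta> (g \<circ> \<phi>) \<le> \<bar>M\<bar>" using M[OF g(1)] by simp
  qed
  show ?thesis unfolding comp_op_norm_def by (rule cSup_upper[OF _ bdd]) (use f in blast)
qed

lemma step12:
  assumes pos: "\<And>n. \<beta> n > 0"
    and bc: "\<And>\<phi>. symbol \<phi> \<Longrightarrow> \<phi> 0 = 0 \<Longrightarrow> bounded_comp_op \<beta> \<phi>"
    and B: "\<And>\<phi>. symbol \<phi> \<Longrightarrow> \<phi> 0 = 0 \<Longrightarrow> comp_op_norm \<beta> \<phi> \<le> B"
    and n: "1 \<le> n" and nm: "n < m"
  shows "\<beta> m \<le> 4 * B^2 * \<beta> n"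
proof -
  obtain \<phi> where \<phi>: "symbol \<phi>" "\<phi> 0 = 0" "\<forall>z\<in>ball 0 1. (\<phi> z) ^ n = z ^ n * ((1 + z ^ (m - n)) / 2)"
  proof -
    have "1 \<le> m - n" using nm by simp
    from construct[OF n this] show ?thesis using that by blast
  qed
  define c where "c = complex_of_real (1 / sqrt (\<beta> n))"
  define f where "f z = c * z ^ n" for z
  have cn: "(cmod c)^2 * \<beta> n = 1" using pos[of n] by (simp add: c_def norm_divide power_divide less_imp_le)
  have tcf: "taylor_coeff f k = (if k = n then c else 0)" for k
  proof -
    have "f has_fps_expansion fps_const c * fps_X ^ n"
      unfolding f_def[abs_def] by (intro has_fps_expansion_cmult_left has_fps_expansion_fps_X_power)
    thus ?thesis using coeff_eq_fps[of f "fps_const c * fps_X ^ n" f k] by (simp add: fps_X_power_nth)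
  qed
  have serf: "(\<lambda>k. (cmod (taylor_coeff f k))^2 * \<beta> k) = (\<lambda>k. if k = n then 1 else 0)"
    using cn by (auto simp: tcf)
  have holf: "f holomorphic_on ball 0 1" unfolding f_def[abs_def] by (intro holomorphic_intros)
  have s1: "(\<lambda>k. if k = n then (1::real) else 0) sums 1" using sums_single[of n "\<lambda>_. 1::real"] by simp
  have inf: "in_H2 \<beta> f" using holf s1 by (auto simp: in_H2_def serf sums_iff)
  have nf: "H2_norm \<beta> f = 1" using s1 by (simp add: H2_norm_def serf sums_iff)
  define g where "g z = (c/2) * z ^ n + (c/2) * z ^ m" for z
  have fg: "\<forall>z\<in>ball 0 1. (f \<circ> \<phi>) z = g z"
  proof
    fix z :: complex assume "z \<in> ball 0 1"
    hence "(\<phi> z) ^ n = z ^ n * ((1 + z ^ (m - n)) / 2)" using \<phi>(3) by blast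
    moreover have "z ^ n * z ^ (m - n) = z ^ m" using nm by (simp add: power_add[symmetric])
    ultimately show "(f \<circ> \<phi>) z = g z" by (simp add: f_def g_def field_simps)
  qed
  have tcg: "taylor_coeff (f \<circ> \<phi>) k = (if k = n then c/2 else 0) + (if k = m then c/2 else 0)" for k
  proof -
    have "g has_fps_expansion fps_const (c/2) * fps_X ^ n + fps_const (c/2) * fps_X ^ m"
      unfolding g_def[abs_def]
      by (intro has_fps_expansion_add has_fps_expansion_cmult_left has_fps_expansion_fps_X_power)
    hence "taylor_coeff (f \<circ> \<phi>) k = (fps_const (c/2) * fps_X ^ n + fps_const (c/2) * fps_X ^ m) $ k"
      by (rule coeff_eq_fps[OF _ fg])
    thus ?thesis by (simp add: fps_X_power_nth)
  qed
  have serg: "(\<lambda>k. (cmod (taylor_coeff (f \<circ> \<phi>) k))^2 * \<beta> k) =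
     (\<lambda>k. (if k = n then 1/4 else 0) + (if k = m then \<beta> m / (4 * \<beta> n) else 0))"
  proof
    fix k
    have c2: "(cmod c)^2 = 1 / \<beta> n" using pos[of n] by (simp add: c_def norm_divide norm_mult power_divide power_mult_distrib less_imp_le)
    show "(cmod (taylor_coeff (f \<circ> \<phi>) k))^2 * \<beta> k =
      (if k = n then 1/4 else 0) + (if k = m then \<beta> m / (4 * \<beta> n) else 0)"
      using nm pos[of n] by (cases "k = n"; cases "k = m") (auto simp: tcg power_divide c2 field_simps)
  qed
  have sums: "(\<lambda>k. (cmod (taylor_coeff (f \<circ> \<phi>) k))^2 * \<beta> k) sums (1/4 + \<beta> m / (4 * \<beta> n))"
    unfolding serg by (intro sums_add sums_single)
  have "H2_norm \<beta> (f \<circ> \<phi>) \<le> comp_op_norm \<beta> \<phi>"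
    by (rule H2_le_norm[OF pos bc[OF \<phi>(1,2)] inf]) (simp add: nf)
  also have "\<dots> \<le> B" by (rule B[OF \<phi>(1,2)])
  finally have "sqrt (1/4 + \<beta> m / (4 * \<beta> n)) \<le> B"
    using sums by (simp add: H2_norm_def sums_iff)
  hence "(sqrt (1/4 + \<beta> m / (4 * \<beta> n)))^2 \<le> B^2"
    by (rule power_mono) (use pos[of m] pos[of n] in simp)
  hence "1/4 + \<beta> m / (4 * \<beta> n) \<le> B^2"
    using pos[of m] pos[of n] by (simp add: less_imp_le)
  hence "\<beta> m / (4 * \<beta> n) \<le> B^2" by simp
  thus ?thesis using pos[of n] by (simp add: field_simps)
qed

lemma zero_in_H2: "in_H2 \<beta> (\<lambda>_. 0)" "H2_norm \<beta> (\<lambda>_. 0) = 0"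
  by (simp_all add: in_H2_def H2_norm_def taylor_coeff_def)

lemma dir2:
  assumes pos: "\<And>n. \<beta> n > 0" and ed: "essentially_decreasing \<beta>"
  shows "(\<forall>\<phi>. symbol \<phi> \<and> \<phi> 0 = 0 \<longrightarrow> bounded_comp_op \<beta> \<phi>) \<and>
          bdd_above {comp_op_norm \<beta> \<phi> | \<phi>. symbol \<phi> \<and> \<phi> 0 = 0}"
proof -
  obtain C where C: "C \<ge> 1" "\<And>m n. n \<le> m \<Longrightarrow> \<beta> m \<le> C * \<beta> n"
    using ed unfolding essentially_decreasing_def by blast
  have key: "in_H2 \<beta> (f \<circ> \<phi>) \<and> H2_norm \<beta> (f \<circ> \<phi>) \<le> sqrt C * H2_norm \<beta> f"
    if \<phi>: "symbol \<phi>" "\<phi> 0 = 0" and f: "in_H2 \<beta> f" for \<phi> f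
  proof -
    have hol: "\<phi> holomorphic_on ball 0 1" and into: "\<phi> ` ball 0 1 \<subseteq> ball 0 1"
      using \<phi> by (auto simp: symbol_def)
    have holf: "f holomorphic_on ball 0 1" and sf: "summable (\<lambda>n. (cmod (taylor_coeff f n))^2 * \<beta> n)"
      using f by (auto simp: in_H2_def)
    note b = ess_dec_bound[OF pos C holf sf hol into \<phi>(2)]
    have "(f \<circ> \<phi>) holomorphic_on ball 0 1" by (rule holomorphic_on_compose_gen[OF hol holf into])
    hence "in_H2 \<beta> (f \<circ> \<phi>)" using b(1) by (simp add: in_H2_def)
    moreover have "H2_norm \<beta> (f \<circ> \<phi>) \<le> sqrt C * H2_norm \<beta> f"
      unfolding H2_norm_def real_sqrt_mult[symmetric] using b(2) by simp
    ultimately show ?thesis by simp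
  qed
  have bc: "bounded_comp_op \<beta> \<phi>" if "symbol \<phi>" "\<phi> 0 = 0" for \<phi>
    unfolding bounded_comp_op_def using key[OF that] by (intro conjI allI impI exI[of _ "sqrt C"]) simp_all
  have nb: "comp_op_norm \<beta> \<phi> \<le> sqrt C" if \<phi>: "symbol \<phi>" "\<phi> 0 = 0" for \<phi>
    unfolding comp_op_norm_def
  proof (rule cSup_least)
    show "{H2_norm \<beta> (f \<circ> \<phi>) |f. in_H2 \<beta> f \<and> H2_norm \<beta> f \<le> 1} \<noteq> {}"
      using zero_in_H2[of \<beta>] by auto
  next
    fix x assume "x \<in> {H2_norm \<beta> (f \<circ> \<phi>) |f. in_H2 \<beta> f \<and> H2_norm \<beta> f \<le> 1}"
    then obtain f where f: "x = H2_norm \<beta> (f \<circ> \<phi>)" "in_H2 \<beta> f" "H2_norm \<beta> f \<le> 1" by blast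
    have "x \<le> sqrt C * H2_norm \<beta> f" using key[OF \<phi> f(2)] f(1) by simp
    also have "\<dots> \<le> sqrt C * 1" using f(3) C(1) by (intro mult_left_mono) auto
    finally show "x \<le> sqrt C" by simp
  qed
  have "bdd_above {comp_op_norm \<beta> \<phi> | \<phi>. symbol \<phi> \<and> \<phi> 0 = 0}"
    by (rule bdd_aboveI[of _ "sqrt C"]) (use nb in blast)
  thus ?thesis using bc by simp
qed

lemma dir1:
  assumes pos: "\<And>n. \<beta> n > 0"
    and H: "(\<forall>\<phi>. symbol \<phi> \<and> \<phi> 0 = 0 \<longrightarrow> bounded_comp_op \<beta> \<phi>) \<and>
          bdd_above {comp_op_norm \<beta> \<phi> | \<phi>. symbol \<phi> \<and> \<phi> 0 = 0}"
  shows "essentially_decreasing \<beta>"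
proof -
  from H have bdd: "bdd_above {comp_op_norm \<beta> \<phi> | \<phi>. symbol \<phi> \<and> \<phi> 0 = 0}" by (rule conjunct2)
  define B where "B = Sup {comp_op_norm \<beta> \<phi> | \<phi>. symbol \<phi> \<and> \<phi> 0 = 0}"
  have B: "comp_op_norm \<beta> \<phi> \<le> B" if "symbol \<phi>" "\<phi> 0 = 0" for \<phi>
    unfolding B_def by (rule cSup_upper[OF _ bdd]) (use that in blast)
  have bc: "bounded_comp_op \<beta> \<phi>" if "symbol \<phi>" "\<phi> 0 = 0" for \<phi>
    using H that by blast
  define K where "K = max 1 (4 * B^2)"
  have K1: "K \<ge> 1" by (simp add: K_def)
  have Kb: "\<beta> m \<le> K * \<beta> n" if nm1: "1 \<le> n" "n \<le> m" for m n
  proof (cases "n = m")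
    case True
    have "1 * \<beta> n \<le> K * \<beta> n" by (rule mult_right_mono[OF K1 less_imp_le[OF pos]])
    thus ?thesis using True by simp
  next
    case False
    hence lt: "n < m" using nm1(2) by simp
    have "\<beta> m \<le> 4 * B^2 * \<beta> n" by (rule step12[OF pos bc B nm1(1) lt])
    also have "\<dots> \<le> K * \<beta> n"
      by (rule mult_right_mono[OF _ less_imp_le[OF pos]]) (unfold K_def, rule max.cobounded2)
    finally show ?thesis .
  qed
  define D where "D = max 1 (\<beta> 1 / \<beta> 0)"
  have D1: "D \<ge> 1" unfolding D_def by (rule max.cobounded1)
  have b1: "\<beta> 1 \<le> D * \<beta> 0"
  proof -
    have "\<beta> 1 = (\<beta> 1 / \<beta> 0) * \<beta> 0" using pos[of 0] by simp
    also have "\<dots> \<le> D * \<beta> 0"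
      by (rule mult_right_mono[OF _ less_imp_le[OF pos]]) (unfold D_def, rule max.cobounded2)
    finally show ?thesis .
  qed
  have KD: "1 \<le> K * D" using mult_mono[OF K1 D1] K1 by simp
  have KKD: "K \<le> K * D" using mult_left_mono[OF D1, of K] K1 by simp
  have main: "\<beta> m \<le> (K * D) * \<beta> n" if nm: "n \<le> m" for m n
  proof (cases "n = 0")
    case n0: True
    show ?thesis
    proof (cases "m = 0")
      case True
      have "1 * \<beta> n \<le> (K * D) * \<beta> n" by (rule mult_right_mono[OF KD less_imp_le[OF pos]])
      thus ?thesis using n0 True by simp
    next
      case False
      hence "1 \<le> m" by simp
      hence "\<beta> m \<le> K * \<beta> 1" using Kb[of 1 m] by simp
      also have "\<dots> \<le> K * (D * \<beta> 0)" by (rule mult_left_mono[OF b1]) (use K1 in simp)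
      finally show ?thesis using n0 by (simp add: mult.assoc)
    qed
  next
    case False
    hence "1 \<le> n" by simp
    hence "\<beta> m \<le> K * \<beta> n" using Kb[of n m] nm by simp
    also have "\<dots> \<le> (K * D) * \<beta> n" by (rule mult_right_mono[OF KKD less_imp_le[OF pos]])
    finally show ?thesis .
  qed
  show ?thesis unfolding essentially_decreasing_def using KD main by blast
qed

theorem mainTheorem5:
  fixes \<beta> :: "nat \<Rightarrow> real"
  assumes pos: "\<And>n. \<beta> n > 0"
    and liminf: "liminf (\<lambda>n. ereal (root n (\<beta> n))) \<ge> 1"
  shows "((\<forall>\<phi>. symbol \<phi> \<and> \<phi> 0 = 0 \<longrightarrow> bounded_comp_op \<beta> \<phi>) \<and>
          bdd_above {comp_op_norm \<beta> \<phi> | \<phi>. symbol \<phi> \<and> \<phi> 0 = 0})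
         \<longleftrightarrow> essentially_decreasing \<beta>"
proof
  assume H: "(\<forall>\<phi>. symbol \<phi> \<and> \<phi> 0 = 0 \<longrightarrow> bounded_comp_op \<beta> \<phi>) \<and>
          bdd_above {comp_op_norm \<beta> \<phi> | \<phi>. symbol \<phi> \<and> \<phi> 0 = 0}"
  show "essentially_decreasing \<beta>" by (rule dir1[of \<beta>, OF pos H])
next
  assume "essentially_decreasing \<beta>"
  thus "(\<forall>\<phi>. symbol \<phi> \<and> \<phi> 0 = 0 \<longrightarrow> bounded_comp_op \<beta> \<phi>) \<and>
          bdd_above {comp_op_norm \<beta> \<phi> | \<phi>. symbol \<phi> \<and> \<phi> 0 = 0}"
    by (rule dir2[of \<beta>, OF pos])
qed

end
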